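(* Let $0<\lambda<1$, let $c>0$, and let $A \subseteq \mathbb{N}$. Suppose that $$\sum_{a \in A[x]} w(a) \sim \exp(c x^{1-\lambda}).$$ Then $$\liminf_{x \to \infty} \frac{\pi_A(x + x^\lambda) - \pi_A(x)}{x^\lambda/\log(x)} \ge \frac{1 - \exp[c(\lambda-1)]}{c(1-\lambda)}.$$
   Context: Fix $0<\lambda<1$. For $c>0$ and $x>0$, define $w(x) = \frac{c(1-\lambda)\log(x)\exp(c x^{1-\lambda})}{x^\lambda}$. Here $\mathbb{N} = \{1,2,3,\dots\}$. For $A \subseteq \mathbb{N}$ and $x\in\mathbb{R}$, write $A[x] = \{a \in A : a \le x\}$ and $\pi_A(x) = \# A[x]$. $f\sim g$ means $f(x)/g(x)\to 1$ as $x\to\infty$. *)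

theory Defs
  imports "HOL-Analysis.Analysis" "HOL-Library.Landau_Symbols"
begin

definition w :: "real \<Rightarrow> real \<Rightarrow> real \<Rightarrow> real" where
  "w lam c x = c * (1 - lam) * ln x * exp (c * x powr (1 - lam)) / x powr lam"

definition upto_set :: "nat set \<Rightarrow> real \<Rightarrow> nat set" where
  "upto_set A x = {a \<in> A. real a \<le> x}"

definition piA :: "nat set \<Rightarrow> real \<Rightarrow> nat" where
  "piA A x = card (upto_set A x)"

end

theory Submission
  imports Defs "HOL-Real_Asymp.Real_Asymp"
begin

lemma L1: "real (a::nat) \<le> y \<Longrightarrow> a \<le> nat \<lfloor>y\<rfloor>"
  by (simp add: le_nat_floor)
lemma L2: fixes S1 S0 E1 E0 lx l1 c lam q :: real
  assumes "E0 > 0" "E1 > 0" "E0 / E1 = q" "l1 > 0" "c*(1-lam) \<noteq> 0"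
  shows "(S1 / E1 - S0 / E0 * q) * (lx / l1) / (c * (1 - lam)) = (S1 - S0) / E1 * (lx / l1) / (c * (1 - lam))"
  using assms by (auto simp: field_simps)
lemma L3: fixes D E1 lx l1 c lam h xl :: real
  assumes "E1 > 0" "l1 > 0" "c>0" "lam < 1" "h > 0" "xl > 0" "lx > 0"
  shows "D / E1 * (lx / l1) / (c * (1 - lam)) = D / (c * (1 - lam) * l1 * E1 / h) * (lx / h)"
  using assms by (auto simp: field_simps)

lemma key_ineq:
  fixes lam c x :: real and A :: "nat set"
  assumes lam: "0 < lam" "lam < 1" and c: "0 < c" and x: "1 < x"
  defines "h \<equiv> x powr lam"
  defines "S \<equiv> (\<lambda>y. \<Sum>a\<in>upto_set A y. w lam c (real a))"
  defines "E \<equiv> (\<lambda>y. exp (c * y powr (1 - lam)))"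
  shows "(S (x + h) / E (x + h) - S x / E x * exp (c * (x powr (1 - lam) - (x + h) powr (1 - lam))))
           * (ln x / ln (x + h)) / (c * (1 - lam))
         \<le> (real (piA A (x + h)) - real (piA A x)) / (h / ln x)"
proof -
  define B where "B = {a \<in> A. x < real a \<and> real a \<le> x + h}"
  have hpos: "h > 0" unfolding h_def using x by simp
  have finU: "finite (upto_set A y)" for y
  proof -
    have "upto_set A y \<subseteq> {..nat \<lfloor>y\<rfloor>}" unfolding upto_set_def
      by (auto intro: L1)
    thus ?thesis using finite_subset by blast
  qed
  have U: "upto_set A (x + h) = upto_set A x \<union> B" and D: "upto_set A x \<inter> B = {}"
    unfolding upto_set_def B_def using hpos by auto
  have finB: "finite B" using finU[of "x+h"] U by auto
  have Ssplit: "S (x + h) = S x + (\<Sum>a\<in>B. w lam c (real a))"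
    unfolding S_def U using sum.union_disjoint[OF finU finB D] by simp
  have Psplit: "real (piA A (x + h)) = real (piA A x) + real (card B)"
    unfolding piA_def U using card_Un_disjoint[OF finU finB D] by simp
  define M where "M = c * (1 - lam) * ln (x + h) * E (x + h) / h"
  have Mpos: "M > 0" unfolding M_def E_def using lam c x hpos by simp
  have wle: "w lam c (real a) \<le> M" if "a \<in> B" for a
  proof -
    have a1: "x < real a" "real a \<le> x + h" using that B_def by auto
    have apos: "real a > 0" using a1 x by linarith
    have "ln (real a) \<le> ln (x + h)" using a1 apos by simp
    moreover have "ln (real a) \<ge> 0" using a1 x by simp
    moreover have "exp (c * real a powr (1 - lam)) \<le> exp (c * (x + h) powr (1 - lam))"
      using a1 apos lam c by (simp add: powr_mono2)
    ultimately have num: "c * (1 - lam) * ln (real a) * exp (c * real a powr (1 - lam))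
       \<le> c * (1 - lam) * ln (x + h) * exp (c * (x + h) powr (1 - lam))"
      using lam c by (intro mult_mono mult_left_mono) auto
    have den: "h \<le> real a powr lam" unfolding h_def using a1 x lam by (simp add: powr_mono2)
    have nn: "0 \<le> c * (1 - lam) * ln (x + h) * exp (c * (x + h) powr (1 - lam))"
      using lam c x hpos by simp
    show ?thesis unfolding w_def M_def E_def
      by (rule frac_le[OF nn num hpos den])
  qed
  have sumle: "(\<Sum>a\<in>B. w lam c (real a)) \<le> real (card B) * M"
    using sum_mono[of B "\<lambda>a. w lam c (real a)" "\<lambda>_. M", OF wle] by simp
  have Epos: "E y > 0" for y unfolding E_def by simp
  have ratio: "E x / E (x + h) = exp (c * (x powr (1 - lam) - (x + h) powr (1 - lam)))"
    unfolding E_def by (simp add: exp_diff[symmetric] algebra_simps)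
  have lnx: "ln x > 0" "ln (x + h) > 0" using x hpos by auto
  have "(S (x + h) / E (x + h) - S x / E x * exp (c * (x powr (1 - lam) - (x + h) powr (1 - lam))))
           * (ln x / ln (x + h)) / (c * (1 - lam))
        = (S (x + h) - S x) / E (x + h) * (ln x / ln (x + h)) / (c * (1 - lam))"
    by (rule L2[OF Epos Epos ratio lnx(2)]) (use lam c in simp)
  also have "\<dots> = (S (x + h) - S x) / M * (ln x / h)"
    unfolding M_def by (rule L3[OF Epos lnx(2) c lam(2) hpos hpos lnx(1)])
  also have "\<dots> \<le> real (card B) * (ln x / h)"
  proof (rule mult_right_mono)
    show "(S (x + h) - S x) / M \<le> real (card B)"
      using Ssplit sumle Mpos by (simp add: pos_divide_le_eq)
    show "0 \<le> ln x / h" using lnx hpos by simp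
  qed
  also have "\<dots> = (real (piA A (x + h)) - real (piA A x)) / (h / ln x)"
    using Psplit by simp
  finally show ?thesis .
qed

theorem mainTheorem5:
  fixes lam c :: real and A :: "nat set"
  assumes "0 < lam" "lam < 1" "0 < c"
    and "A \<subseteq> {1..}"
    and "(\<lambda>x. \<Sum>a\<in>upto_set A x. w lam c (real a)) \<sim>[at_top] (\<lambda>x. exp (c * x powr (1 - lam)))"
  shows "Liminf at_top (\<lambda>x::real. ereal ((real (piA A (x + x powr lam)) - real (piA A x))
            / (x powr lam / ln x)))
         \<ge> ereal ((1 - exp (c * (lam - 1))) / (c * (1 - lam)))"
proof -
  note lam = assms(1,2) and c = assms(3)
  define S where "S = (\<lambda>y. \<Sum>a\<in>upto_set A y. w lam c (real a))"
  define E where "E = (\<lambda>y::real. exp (c * y powr (1 - lam)))"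
  define r where "r = (\<lambda>y. S y / E y)"
  define g where "g = (\<lambda>x. (r (x + x powr lam) - r x * exp (c * (x powr (1 - lam) - (x + x powr lam) powr (1 - lam))))
           * (ln x / ln (x + x powr lam)) / (c * (1 - lam)))"
  have r1: "(r \<longlongrightarrow> 1) at_top"
    unfolding r_def using asymp_equivD_strong[OF assms(5)[folded S_def E_def]]
    by (simp add: E_def)
  have fl: "filterlim (\<lambda>x::real. x + x powr lam) at_top at_top" using lam by real_asymp
  have r2: "((\<lambda>x. r (x + x powr lam)) \<longlongrightarrow> 1) at_top"
    using filterlim_compose[OF r1 fl] by simp
  have d: "((\<lambda>x::real. x powr (1-lam) - (x + x powr lam) powr (1 - lam)) \<longlongrightarrow> -(1-lam)) at_top"
    using lam by real_asymp
  have l: "((\<lambda>x::real. ln x / ln (x + x powr lam)) \<longlongrightarrow> 1) at_top"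
    using lam by real_asymp
  have "(g \<longlongrightarrow> (1 - 1 * exp (c * (-(1-lam)))) * 1 / (c * (1 - lam))) at_top"
    proof -
    have e: "((\<lambda>x::real. exp (c * (x powr (1 - lam) - (x + x powr lam) powr (1 - lam)))) \<longlongrightarrow> exp (c * (-(1-lam)))) at_top"
      by (rule tendsto_exp[OF tendsto_mult[OF tendsto_const d]])
    have nz: "c * (1 - lam) \<noteq> 0" using lam c by simp
    show ?thesis unfolding g_def
      by (rule tendsto_divide[OF tendsto_mult[OF tendsto_diff[OF r2 tendsto_mult[OF r1 e]] l] tendsto_const nz])
  qed
  hence gl: "(g \<longlongrightarrow> (1 - exp (c * (lam - 1))) / (c * (1 - lam))) at_top"
    by (simp add: algebra_simps)
  have ev: "eventually (\<lambda>x. ereal (g x) \<le> ereal ((real (piA A (x + x powr lam)) - real (piA A x))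
            / (x powr lam / ln x))) at_top"
    using eventually_gt_at_top[of "1::real"]
  proof eventually_elim
    case (elim x)
    show ?case using key_ineq[OF lam c elim, of A] unfolding g_def r_def S_def E_def by simp
  qed
  have "ereal ((1 - exp (c * (lam - 1))) / (c * (1 - lam))) = Liminf at_top (\<lambda>x. ereal (g x))"
    by (rule lim_imp_Liminf[symmetric]) (auto intro: tendsto_ereal gl)
  also have "\<dots> \<le> Liminf at_top (\<lambda>x::real. ereal ((real (piA A (x + x powr lam)) - real (piA A x))
            / (x powr lam / ln x)))"
    by (rule Liminf_mono[OF ev])
  finally show ?thesis .
qed

end
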